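(* Let $\phi:\mathbb{R}^d\to\mathbb{R}^d$ be $(L,\lambda)$-Hölder continuous with $L\ge0$, $\lambda\in(0,1]$, and let $I$ be the identity map. For $z\ge0$ let $h(z)$ be the unique $x\ge0$ solving $x+Lx^\lambda=z$. Then for all probability distributions $\mu,\nu$ on $\mathbb{R}^d$, all $\alpha>1$ and all $z\ge0$, $$D_\alpha^{(z)}\big((I+\phi)\sharp\mu\,\|\,(I+\phi)\sharp\nu\big)\le D_\alpha^{(h(z))}(\mu\|\nu).$$
   Context: $f\sharp\mu$ denotes the pushforward of $\mu$ under $f$. A map $f$ is $(L,\lambda)$-Hölder continuous if $\|f(w)-f(w')\|\le L\|w-w'\|^\lambda$ for all $w,w'$. For $\alpha>1$, $D_\alpha(\mu\|\nu)=\frac1{\alpha-1}\log\int(\mu/\nu)^\alpha d\nu$ if $\mu\ll\nu$, $+\infty$ otherwise. $W_\infty(\mu,\nu)=\inf_{\gamma\in\Gamma(\mu,\nu)}\operatorname{ess\,sup}_{(X,Y)\sim\gamma}\|X-Y\|$ over couplings $\gamma$. Shifted Rényi divergence: $D_\alpha^{(z)}(\mu\|\nu)=\inf_{\mu':W_\infty(\mu,\mu')\le z}D_\alpha(\mu'\|\nu)$ for $z\ge0$. *)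

theory Defs
  imports "HOL-Probability.Probability"
begin

definition prob_dist :: "'a::euclidean_space measure \<Rightarrow> bool" where
  "prob_dist \<mu> \<longleftrightarrow> prob_space \<mu> \<and> sets \<mu> = sets borel"

definition holder :: "real \<Rightarrow> real \<Rightarrow> ('a::real_normed_vector \<Rightarrow> 'b::real_normed_vector) \<Rightarrow> bool" where
  "holder L lam f \<longleftrightarrow> (\<forall>w w'. norm (f w - f w') \<le> L * norm (w - w') powr lam)"

definition pushforward :: "('a::euclidean_space \<Rightarrow> 'b::euclidean_space) \<Rightarrow> 'a measure \<Rightarrow> 'b measure" where
  "pushforward f \<mu> = distr \<mu> borel f"

text \<open>Renyi divergence D_alpha(mu || nu), valued in the extended reals.
  The density mu/nu is the Radon-Nikodym derivative RN_deriv nu mu.\<close>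
definition renyi :: "real \<Rightarrow> 'a::euclidean_space measure \<Rightarrow> 'a measure \<Rightarrow> ereal" where
  "renyi \<alpha> \<mu> \<nu> =
     (if absolutely_continuous \<nu> \<mu> then
        (let I = (\<integral>\<^sup>+ x. ennreal (enn2real (RN_deriv \<nu> \<mu> x) powr \<alpha>) \<partial>\<nu>)
         in if I = \<infinity> then \<infinity> else ereal (ln (enn2real I) / (\<alpha> - 1)))
      else \<infinity>)"

definition couplings :: "'a::euclidean_space measure \<Rightarrow> 'a measure \<Rightarrow> ('a \<times> 'a) measure set" where
  "couplings \<mu> \<nu> = {\<gamma>. prob_space \<gamma> \<and> sets \<gamma> = sets (borel \<Otimes>\<^sub>M borel) \<and>
                        distr \<gamma> borel fst = \<mu> \<and> distr \<gamma> borel snd = \<nu>}"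

definition W_inf :: "'a::euclidean_space measure \<Rightarrow> 'a measure \<Rightarrow> ereal" where
  "W_inf \<mu> \<nu> = (INF \<gamma> \<in> couplings \<mu> \<nu>. esssup \<gamma> (\<lambda>p. ereal (norm (fst p - snd p))))"

definition shifted_renyi :: "real \<Rightarrow> real \<Rightarrow> 'a::euclidean_space measure \<Rightarrow> 'a measure \<Rightarrow> ereal" where
  "shifted_renyi \<alpha> z \<mu> \<nu> =
     (INF \<mu>' \<in> {\<mu>'. prob_dist \<mu>' \<and> W_inf \<mu> \<mu>' \<le> ereal z}. renyi \<alpha> \<mu>' \<nu>)"

end

theory Submission
  imports Defs
begin


lemma h_props:
  fixes L lam z :: real
  assumes "L \<ge> 0" "0 < lam" "z \<ge> 0"
  shows "(THE x. x \<ge> 0 \<and> x + L * x powr lam = z) \<ge> 0 \<and>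
    (THE x. x \<ge> 0 \<and> x + L * x powr lam = z) + L * (THE x. x \<ge> 0 \<and> x + L * x powr lam = z) powr lam = z"
proof (rule theI')
  have c: "continuous_on {0..z} (\<lambda>x. x + L * x powr lam)"
    using assms by (intro continuous_intros continuous_on_powr') auto
  have "\<exists>x. 0 \<le> x \<and> x \<le> z \<and> x + L * x powr lam = z"
    by (rule IVT'[OF _ _ _ c]) (use assms in auto)
  moreover have "x = y" if "0 \<le> x" "0 \<le> y" "x + L * x powr lam = z" "y + L * y powr lam = z" for x y
  proof (rule ccontr)
    assume "x \<noteq> y"
    then consider "x < y" | "y < x" by linarith
    then show False
    proof cases
      case 1
      then have "x powr lam \<le> y powr lam" using that assms by (intro powr_mono2) auto
      then have "L * x powr lam \<le> L * y powr lam" using assms by (intro mult_left_mono) auto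
      then show False using 1 that by linarith
    next
      case 2
      then have "y powr lam \<le> x powr lam" using that assms by (intro powr_mono2) auto
      then have "L * y powr lam \<le> L * x powr lam" using assms by (intro mult_left_mono) auto
      then show False using 2 that by linarith
    qed
  qed
  ultimately show "\<exists>!x. x \<ge> 0 \<and> x + L * x powr lam = z" by blast
qed

lemma psi_cont:
  fixes L lam h z d :: real
  assumes "L \<ge> 0" "0 < lam" "h \<ge> 0" "h + L * h powr lam = z" "d > 0"
  shows "\<exists>e>0. (h + e) + L * (h + e) powr lam \<le> z + d"
proof -
  have c: "continuous_on {0..} (\<lambda>x. x + L * x powr lam)"
    using assms by (intro continuous_intros continuous_on_powr') auto
  then have "((\<lambda>x. x + L * x powr lam) \<longlongrightarrow> z) (at h within {0..})"
    using assms unfolding continuous_on_def by auto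
  then have "\<forall>\<^sub>F x in at h within {0..}. x + L * x powr lam < z + d"
    using assms by (intro order_tendstoD) auto
  then obtain r where r: "r > 0" "\<And>x. x \<in> {0..} \<Longrightarrow> x \<noteq> h \<Longrightarrow> dist x h < r \<Longrightarrow> x + L * x powr lam < z + d"
    unfolding eventually_at by blast
  show ?thesis
    using r(2)[of "h + r/2"] r(1) assms by (intro exI[of _ "r/2"]) (auto simp: dist_real_def)
qed



lemma push_prob_dist:
  fixes T :: "'a::euclidean_space \<Rightarrow> 'a"
  assumes "T \<in> borel_measurable borel" "prob_dist \<mu>"
  shows "prob_dist (pushforward T \<mu>)"
proof -
  have s: "sets \<mu> = sets borel" and p: "prob_space \<mu>" using assms by (auto simp: prob_dist_def)
  have m: "T \<in> measurable \<mu> borel" using assms(1) by (simp add: measurable_cong_sets[OF s refl])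
  show ?thesis unfolding prob_dist_def pushforward_def
    using prob_space.prob_space_distr[OF p m] by simp
qed

lemma winf_push:
  fixes T :: "'a::euclidean_space \<Rightarrow> 'a" and \<psi> :: "real \<Rightarrow> real"
  assumes Tm: "T \<in> borel_measurable borel"
    and Tb: "\<And>x y r. norm (x - y) \<le> r \<Longrightarrow> norm (T x - T y) \<le> \<psi> r"
    and cont: "\<And>d. d > 0 \<Longrightarrow> \<exists>e>0. \<psi> (h + e) \<le> z + d"
    and W: "W_inf \<mu> \<mu>' \<le> ereal h"
  shows "W_inf (pushforward T \<mu>) (pushforward T \<mu>') \<le> ereal z"
proof (rule ereal_le_epsilon2)
  fix d :: real assume "d > 0"
  then obtain e where e: "e > 0" "\<psi> (h + e) \<le> z + d" using cont by blast
  have "ereal h < ereal (h + e)" using e by simp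
  with W have "W_inf \<mu> \<mu>' < ereal (h + e)" by (rule le_less_trans)
  then obtain \<gamma> where g: "\<gamma> \<in> couplings \<mu> \<mu>'"
      and ge: "esssup \<gamma> (\<lambda>p. ereal (norm (fst p - snd p))) < ereal (h + e)"
    unfolding W_inf_def by (auto simp: INF_less_iff)
  have gs: "sets \<gamma> = sets (borel \<Otimes>\<^sub>M borel)" and gp: "prob_space \<gamma>"
    and g1: "distr \<gamma> borel fst = \<mu>" and g2: "distr \<gamma> borel snd = \<mu>'"
    using g by (auto simp: couplings_def)
  define F where "F = (\<lambda>p::'a\<times>'a. (T (fst p), T (snd p)))"
  have Fm: "F \<in> measurable \<gamma> (borel \<Otimes>\<^sub>M borel)"
    unfolding measurable_cong_sets[OF gs refl] F_def using Tm by measurable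
  define \<gamma>' where "\<gamma>' = distr \<gamma> (borel \<Otimes>\<^sub>M borel) F"
  have fstm: "fst \<in> measurable \<gamma> borel" "snd \<in> measurable \<gamma> borel"
    unfolding measurable_cong_sets[OF gs refl] by (auto simp: borel_prod[symmetric])
  have "\<gamma>' \<in> couplings (pushforward T \<mu>) (pushforward T \<mu>')"
    unfolding couplings_def mem_Collect_eq
  proof (intro conjI)
    show "prob_space \<gamma>'" unfolding \<gamma>'_def by (rule prob_space.prob_space_distr[OF gp Fm])
    show "sets \<gamma>' = sets (borel \<Otimes>\<^sub>M borel)" by (simp add: \<gamma>'_def)
    have "distr \<gamma>' borel fst = distr \<gamma> borel (fst \<circ> F)"
      unfolding \<gamma>'_def by (rule distr_distr) (use Fm in auto)
    also have "\<dots> = distr \<gamma> borel (T \<circ> fst)" by (simp add: F_def o_def)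
    also have "\<dots> = distr (distr \<gamma> borel fst) borel T"
      by (rule distr_distr[symmetric]) (use Tm fstm in auto)
    finally show "distr \<gamma>' borel fst = pushforward T \<mu>" using g1 by (simp add: pushforward_def)
    have "distr \<gamma>' borel snd = distr \<gamma> borel (snd \<circ> F)"
      unfolding \<gamma>'_def by (rule distr_distr) (use Fm in auto)
    also have "\<dots> = distr \<gamma> borel (T \<circ> snd)" by (simp add: F_def o_def)
    also have "\<dots> = distr (distr \<gamma> borel snd) borel T"
      by (rule distr_distr[symmetric]) (use Tm fstm in auto)
    finally show "distr \<gamma>' borel snd = pushforward T \<mu>'" using g2 by (simp add: pushforward_def)
  qed
  moreover have "esssup \<gamma>' (\<lambda>p. ereal (norm (fst p - snd p))) \<le> ereal (z + d)"
  proof (rule esssup_I)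
    show "(\<lambda>p. ereal (norm (fst p - snd p))) \<in> borel_measurable \<gamma>'"
      unfolding \<gamma>'_def by measurable
    have "AE p in \<gamma>. ereal (norm (fst p - snd p)) \<le> esssup \<gamma> (\<lambda>p. ereal (norm (fst p - snd p)))"
      by (rule esssup_AE)
    then have "AE p in \<gamma>. ereal (norm (fst (F p) - snd (F p))) \<le> ereal (z + d)"
    proof eventually_elim
      case (elim p)
      then have "ereal (norm (fst p - snd p)) \<le> ereal (h + e)" using ge by (meson less_imp_le order_trans)
      then have "norm (fst p - snd p) \<le> h + e" by simp
      then have "norm (T (fst p) - T (snd p)) \<le> \<psi> (h + e)" by (rule Tb)
      then show ?case using e by (simp add: F_def)
    qed
    then show "AE p in \<gamma>'. ereal (norm (fst p - snd p)) \<le> ereal (z + d)"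
      unfolding \<gamma>'_def by (subst AE_distr_iff[OF Fm]) auto
  qed
  ultimately have "W_inf (pushforward T \<mu>) (pushforward T \<mu>') \<le> ereal (z + d)"
    unfolding W_inf_def by (rule INF_lower2)
  then show "W_inf (pushforward T \<mu>) (pushforward T \<mu>') \<le> ereal z + ereal d" by simp
qed



lemma pw1:
  fixes m G \<alpha> :: real
  assumes "0 \<le> m" "m \<le> G" "\<alpha> > 1"
  shows "m powr \<alpha> \<le> G * m powr (\<alpha> - 1)"
proof (cases "m = 0")
  case True then show ?thesis using assms by simp
next
  case False
  then have "m powr \<alpha> = m * m powr (\<alpha> - 1)" using assms by (simp add: powr_mult_base)
  also have "\<dots> \<le> G * m powr (\<alpha> - 1)" using assms by (intro mult_right_mono) auto
  finally show ?thesis .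
qed

lemma pw2:
  fixes F m \<alpha> :: real
  assumes "0 \<le> F" "0 \<le> m" "\<alpha> > 1"
  shows "F * m powr (\<alpha> - 1) \<le> 1/\<alpha> * F powr \<alpha> + (\<alpha> - 1)/\<alpha> * m powr \<alpha>"
proof -
  have q: "\<alpha>/(\<alpha>-1) > 1" using assms by (simp add: field_simps)
  have s: "1/\<alpha> + 1/(\<alpha>/(\<alpha>-1)) = 1" using assms by (simp add: field_simps)
  have "F * m powr (\<alpha> - 1) \<le> F powr \<alpha> / \<alpha> + (m powr (\<alpha> - 1)) powr (\<alpha>/(\<alpha>-1)) / (\<alpha>/(\<alpha>-1))"
    by (rule Youngs_inequality[OF _ q s]) (use assms in auto)
  also have "(m powr (\<alpha> - 1)) powr (\<alpha>/(\<alpha>-1)) = m powr \<alpha>"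
    using assms by (simp add: powr_powr)
  finally show ?thesis by (simp add: field_simps)
qed

lemma dpi:
  fixes T :: "'a::euclidean_space \<Rightarrow> 'a"
  assumes Tm: "T \<in> borel_measurable borel" and Pd: "prob_dist P" and Qd: "prob_dist Q" and a: "\<alpha> > 1"
  shows "renyi \<alpha> (pushforward T P) (pushforward T Q) \<le> renyi \<alpha> P Q"
proof (cases "absolutely_continuous Q P")
  case False thus ?thesis by (simp add: renyi_def)
next
  case ac: True
  define f where "f = RN_deriv Q P"
  define B where "B = (\<integral>\<^sup>+ x. ennreal (enn2real (f x) powr \<alpha>) \<partial>Q)"
  show ?thesis
  proof (cases "B = \<infinity>")
    case True thus ?thesis using ac by (simp add: renyi_def B_def f_def Let_def)
  next
    case Bfin: False
    interpret P: prob_space P using Pd by (simp add: prob_dist_def)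
    interpret Q: prob_space Q using Qd by (simp add: prob_dist_def)
    have sP: "sets P = sets borel" and sQ: "sets Q = sets borel" using Pd Qd by (auto simp: prob_dist_def)
    have spQ: "space Q = space P" using sP sQ by (metis sets_eq_imp_space_eq)
    have TP: "T \<in> measurable P borel" using Tm by (simp add: measurable_cong_sets[OF sP refl])
    have TQ: "T \<in> measurable Q borel" using Tm by (simp add: measurable_cong_sets[OF sQ refl])
    define P' where "P' = distr P borel T"
    define Q' where "Q' = distr Q borel T"
    interpret P': prob_space P' unfolding P'_def by (rule P.prob_space_distr[OF TP])
    interpret Q': prob_space Q' unfolding Q'_def by (rule Q.prob_space_distr[OF TQ])
    have sP': "sets P' = sets Q'" by (simp add: P'_def Q'_def)
    have ac': "absolutely_continuous Q' P'"
      unfolding absolutely_continuous_def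
    proof
      fix X assume "X \<in> null_sets Q'"
      then have "T -` X \<inter> space Q \<in> null_sets Q" "X \<in> sets borel"
        unfolding Q'_def using null_sets_distr_iff[OF TQ] by auto
      then have "T -` X \<inter> space P \<in> null_sets P"
        using ac spQ unfolding absolutely_continuous_def by auto
      then show "X \<in> null_sets P'" unfolding P'_def using null_sets_distr_iff[OF TP] \<open>X \<in> sets borel\<close> by auto
    qed
    define g where "g = RN_deriv Q' P'"
    have dens: "density Q' g = P'"
      unfolding g_def by (rule Q'.density_RN_deriv[OF ac' sP'])
    have densP: "density Q f = P"
      unfolding f_def by (rule Q.density_RN_deriv[OF ac]) (simp add: sP sQ)
    have gfin: "AE y in Q'. g y \<noteq> \<infinity>"
      unfolding g_def by (rule Q'.RN_deriv_finite[OF _ ac' sP']) (rule P'.sigma_finite_measure_axioms)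
    have ffin: "AE x in Q. f x \<noteq> \<infinity>"
      unfolding f_def by (rule Q.RN_deriv_finite[OF _ ac]) (auto simp: sP sQ intro: P.sigma_finite_measure_axioms)
    have gm[measurable]: "g \<in> borel_measurable Q'" unfolding g_def by simp
    have fm[measurable]: "f \<in> borel_measurable Q" unfolding f_def by simp
    define G where "G y = enn2real (g y)" for y
    define A where "A = (\<integral>\<^sup>+ y. ennreal (G y powr \<alpha>) \<partial>Q')"
    define An where "An n = (\<integral>\<^sup>+ y. ennreal (min (G y) (real n) powr \<alpha>) \<partial>Q')" for n :: nat
    have sQ': "sets Q' = sets borel" by (simp add: Q'_def)
    have gb[measurable]: "g \<in> borel_measurable borel" using gm by (simp add: measurable_cong_sets[OF sQ' refl])
    have Gb[measurable]: "G \<in> borel_measurable borel" unfolding G_def by measurable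
    have G0: "0 \<le> G y" for y by (simp add: G_def)
    have An_le: "An n \<le> B" for n
    proof -
      define m where "m y = min (G y) (real n)" for y
      have m0: "0 \<le> m y" for y by (simp add: m_def G0)
      have mG: "m y \<le> G y" "m y \<le> real n" for y by (auto simp: m_def)
      have mb[measurable]: "m \<in> borel_measurable borel" unfolding m_def by measurable
      have mQ'[measurable]: "m \<in> borel_measurable Q'" using mb by (simp add: measurable_cong_sets[OF sQ' refl])
      have An_m: "An n = (\<integral>\<^sup>+ y. ennreal (m y powr \<alpha>) \<partial>Q')" by (simp add: An_def m_def)
      have "An n \<le> (\<integral>\<^sup>+ y. ennreal (real n powr \<alpha>) \<partial>Q')"
        unfolding An_m using a by (intro nn_integral_mono ennreal_leI powr_mono2) (auto simp: m0 mG)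
      then have "An n \<le> ennreal (real n powr \<alpha>)" using Q'.emeasure_space_1 by simp
      then have Anfin: "An n < \<infinity>" by (metis ennreal_less_top infinity_ennreal_def le_less_trans)
      have s1: "An n \<le> (\<integral>\<^sup>+ y. g y * ennreal (m y powr (\<alpha> - 1)) \<partial>Q')"
        unfolding An_m
      proof (rule nn_integral_mono_AE)
        show "AE y in Q'. ennreal (m y powr \<alpha>) \<le> g y * ennreal (m y powr (\<alpha> - 1))"
          using gfin
        proof eventually_elim
          case (elim y)
          then have "g y = ennreal (G y)" by (simp add: G_def less_top)
          moreover have "m y powr \<alpha> \<le> G y * m y powr (\<alpha> - 1)" using pw1[OF m0 mG(1) a] .
          ultimately show ?case by (simp add: ennreal_mult'' [symmetric] G0 ennreal_leI)
        qed
      qed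
      have s2: "(\<integral>\<^sup>+ y. g y * ennreal (m y powr (\<alpha> - 1)) \<partial>Q') = (\<integral>\<^sup>+ y. ennreal (m y powr (\<alpha> - 1)) \<partial>P')"
        by (subst dens[symmetric], subst nn_integral_density) auto
      have s3: "(\<integral>\<^sup>+ y. ennreal (m y powr (\<alpha> - 1)) \<partial>P') = (\<integral>\<^sup>+ x. ennreal (m (T x) powr (\<alpha> - 1)) \<partial>P)"
        unfolding P'_def by (rule nn_integral_distr[OF TP]) measurable
      have s4: "(\<integral>\<^sup>+ x. ennreal (m (T x) powr (\<alpha> - 1)) \<partial>P) = (\<integral>\<^sup>+ x. f x * ennreal (m (T x) powr (\<alpha> - 1)) \<partial>Q)"
        using TQ by (subst densP[symmetric], subst nn_integral_density) auto
      have s5: "(\<integral>\<^sup>+ x. f x * ennreal (m (T x) powr (\<alpha> - 1)) \<partial>Q) \<le>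
          (\<integral>\<^sup>+ x. ennreal (1/\<alpha>) * ennreal (enn2real (f x) powr \<alpha>) + ennreal ((\<alpha> - 1)/\<alpha>) * ennreal (m (T x) powr \<alpha>) \<partial>Q)"
      proof (rule nn_integral_mono_AE)
        show "AE x in Q. f x * ennreal (m (T x) powr (\<alpha> - 1)) \<le> ennreal (1/\<alpha>) * ennreal (enn2real (f x) powr \<alpha>) + ennreal ((\<alpha> - 1)/\<alpha>) * ennreal (m (T x) powr \<alpha>)"
          using ffin
        proof eventually_elim
          case (elim x)
          then have fx: "f x = ennreal (enn2real (f x))" by (simp add: less_top)
          have "enn2real (f x) * m (T x) powr (\<alpha> - 1) \<le> 1/\<alpha> * enn2real (f x) powr \<alpha> + (\<alpha> - 1)/\<alpha> * m (T x) powr \<alpha>"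
            by (rule pw2[OF _ m0 a]) simp
          then have "ennreal (enn2real (f x) * m (T x) powr (\<alpha> - 1)) \<le> ennreal (1/\<alpha> * enn2real (f x) powr \<alpha> + (\<alpha> - 1)/\<alpha> * m (T x) powr \<alpha>)"
            by (rule ennreal_leI)
          also have "\<dots> = ennreal (1/\<alpha>) * ennreal (enn2real (f x) powr \<alpha>) + ennreal ((\<alpha> - 1)/\<alpha>) * ennreal (m (T x) powr \<alpha>)"
            using a by (simp add: ennreal_plus[symmetric] ennreal_mult[symmetric] del: ennreal_plus)
          finally show ?case using fx by (metis ennreal_mult'' enn2real_nonneg powr_ge_zero)
        qed
      qed
      have s6: "(\<integral>\<^sup>+ x. ennreal (1/\<alpha>) * ennreal (enn2real (f x) powr \<alpha>) + ennreal ((\<alpha> - 1)/\<alpha>) * ennreal (m (T x) powr \<alpha>) \<partial>Q)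
          = ennreal (1/\<alpha>) * B + ennreal ((\<alpha> - 1)/\<alpha>) * (\<integral>\<^sup>+ x. ennreal (m (T x) powr \<alpha>) \<partial>Q)"
        using TQ by (simp add: nn_integral_add nn_integral_cmult B_def)
      have s7: "(\<integral>\<^sup>+ x. ennreal (m (T x) powr \<alpha>) \<partial>Q) = An n"
        unfolding An_m Q'_def by (rule nn_integral_distr[OF TQ, symmetric]) measurable
      have main: "An n \<le> ennreal (1/\<alpha>) * B + ennreal ((\<alpha> - 1)/\<alpha>) * An n"
        using s1 s2 s3 s4 s5 s6 s7 by simp
      define x where "x = enn2real (An n)"
      define b where "b = enn2real B"
      have xe: "An n = ennreal x" "0 \<le> x" using Anfin by (auto simp: x_def)
      have be: "B = ennreal b" "0 \<le> b" using Bfin by (auto simp: b_def less_top)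
      have "ennreal x \<le> ennreal (1/\<alpha> * b + (\<alpha> - 1)/\<alpha> * x)"
        using main a xe be by (simp add: ennreal_plus[symmetric] ennreal_mult[symmetric] del: ennreal_plus)
      then have "x \<le> 1/\<alpha> * b + (\<alpha> - 1)/\<alpha> * x" using a xe be by (subst (asm) ennreal_le_iff) auto
      then have "x \<le> b" using a by (simp add: field_simps)
      then show ?thesis using xe be by (simp add: ennreal_leI)
    qed
    have A_sup: "A = (SUP n. An n)"
    proof -
      have eq: "(SUP n. ennreal (min (G y) (real n) powr \<alpha>)) = ennreal (G y powr \<alpha>)" for y
      proof (rule antisym)
        show "(SUP n. ennreal (min (G y) (real n) powr \<alpha>)) \<le> ennreal (G y powr \<alpha>)"
          using a by (intro SUP_least ennreal_leI powr_mono2) (auto simp: G0)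
        obtain n :: nat where "G y \<le> real n" using real_arch_simple by blast
        then show "ennreal (G y powr \<alpha>) \<le> (SUP n. ennreal (min (G y) (real n) powr \<alpha>))"
          by (intro SUP_upper2[of n]) (auto simp: min_def)
      qed
      have "(\<integral>\<^sup>+ y. (SUP n. ennreal (min (G y) (real n) powr \<alpha>)) \<partial>Q') = (SUP n. An n)"
        unfolding An_def
      proof (rule nn_integral_monotone_convergence_SUP)
        show "incseq (\<lambda>n y. ennreal (min (G y) (real n) powr \<alpha>))"
          using a by (auto simp: incseq_def le_fun_def G0 intro!: ennreal_leI powr_mono2)
        have "G \<in> borel_measurable Q'" using Gb by (simp add: measurable_cong_sets[OF sQ' refl])
        then show "(\<lambda>y. ennreal (min (G y) (real i) powr \<alpha>)) \<in> borel_measurable Q'" for i by measurable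
      qed
      then show ?thesis using eq by (simp add: A_def)
    qed
    have AB: "A \<le> B" using A_sup An_le by (simp add: SUP_least)
    have Apos: "A \<noteq> 0"
    proof
      assume "A = 0"
      have GQ'[measurable]: "G \<in> borel_measurable Q'" using Gb by (simp add: measurable_cong_sets[OF sQ' refl])
      have "AE y in Q'. ennreal (G y powr \<alpha>) = 0" using \<open>A = 0\<close> unfolding A_def
        by (subst (asm) nn_integral_0_iff_AE) auto
      then have "AE y in Q'. g y = 0" using gfin
      proof eventually_elim
        case (elim y)
        then have "G y powr \<alpha> = 0" using G0[of y] by (simp add: ennreal_eq_0_iff)
        then have "G y = 0" by simp
        then show ?case using elim by (simp add: G_def enn2real_eq_0_iff)
      qed
      then have "emeasure (density Q' g) (space Q') = 0"
        by (subst emeasure_density) (auto intro!: nn_integral_0_iff_AE[THEN iffD2])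
      then show False using dens P'.emeasure_space_1 sets_eq_imp_space_eq[OF sP'] by simp
    qed
    have Afin: "A \<noteq> \<infinity>" using AB Bfin by (metis infinity_ennreal_def neq_top_trans)
    have rA: "renyi \<alpha> P' Q' = ereal (ln (enn2real A) / (\<alpha> - 1))"
      using ac' Afin by (simp add: renyi_def A_def G_def g_def Let_def)
    have rB: "renyi \<alpha> P Q = ereal (ln (enn2real B) / (\<alpha> - 1))"
      using ac Bfin by (simp add: renyi_def B_def f_def Let_def)
    have A0: "0 < enn2real A" using Apos Afin by (simp add: enn2real_positive_iff less_top zero_less_iff_neq_zero)
    have "enn2real A \<le> enn2real B" using AB Bfin by (simp add: enn2real_mono less_top)
    then have "ln (enn2real A) \<le> ln (enn2real B)" using A0 by simp
    then have "ln (enn2real A) / (\<alpha> - 1) \<le> ln (enn2real B) / (\<alpha> - 1)" using a by (simp add: divide_right_mono)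
    then show ?thesis using rA rB by (simp add: P'_def Q'_def pushforward_def)
  qed
qed


theorem mainTheorem8:
  fixes \<phi> :: "'a::euclidean_space \<Rightarrow> 'a"
    and L lam \<alpha> z :: real
    and \<mu> \<nu> :: "'a measure"
  assumes "L \<ge> 0" and "0 < lam" and "lam \<le> 1"
    and "holder L lam \<phi>"
    and "prob_dist \<mu>" and "prob_dist \<nu>"
    and "\<alpha> > 1" and "z \<ge> 0"
  shows "shifted_renyi \<alpha> z (pushforward (\<lambda>x. x + \<phi> x) \<mu>) (pushforward (\<lambda>x. x + \<phi> x) \<nu>)
         \<le> shifted_renyi \<alpha> (THE x. x \<ge> 0 \<and> x + L * x powr lam = z) \<mu> \<nu>"
proof -
  define h where "h = (THE x. x \<ge> 0 \<and> x + L * x powr lam = z)"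
  define T where "T = (\<lambda>x::'a. x + \<phi> x)"
  have hp: "h \<ge> 0" "h + L * h powr lam = z" using h_props[OF assms(1,2,8)] unfolding h_def by auto
  have Tb: "norm (T x - T y) \<le> r + L * r powr lam" if "norm (x - y) \<le> r" for x y r
  proof -
    have "norm (T x - T y) \<le> norm (x - y) + norm (\<phi> x - \<phi> y)"
      unfolding T_def by (metis add_diff_add norm_triangle_ineq)
    also have "norm (\<phi> x - \<phi> y) \<le> L * norm (x - y) powr lam" using assms(4) by (simp add: holder_def)
    also have "L * norm (x - y) powr lam \<le> L * r powr lam"
      using that assms by (intro mult_left_mono powr_mono2) auto
    finally show ?thesis using that by linarith
  qed
  have Tc: "continuous_on UNIV T"
  proof (rule continuous_onI)
    fix x and e :: real assume "e > 0"
    obtain d where d: "d > 0" "d + L * d powr lam \<le> 0 + e / 2"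
      using psi_cont[OF assms(1,2) order_refl _ \<open>e > 0\<close>[THEN half_gt_zero]] by auto
    show "\<exists>d>0. \<forall>x'\<in>UNIV. dist x' x < d \<longrightarrow> dist (T x') (T x) \<le> e"
    proof (intro exI[of _ d] conjI ballI impI)
      fix x' assume "dist x' x < d"
      then have "norm (T x' - T x) \<le> d + L * d powr lam" by (intro Tb) (simp add: dist_norm)
      then show "dist (T x') (T x) \<le> e" using d \<open>e > 0\<close> by (simp add: dist_norm)
    qed (use d in auto)
  qed
  have Tm: "T \<in> borel_measurable borel" using Tc by (rule borel_measurable_continuous_onI)
  show ?thesis
    unfolding h_def[symmetric] T_def[symmetric] shifted_renyi_def
  proof (rule INF_greatest)
    fix \<mu>' assume "\<mu>' \<in> {\<mu>'. prob_dist \<mu>' \<and> W_inf \<mu> \<mu>' \<le> ereal h}"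
    then have p: "prob_dist \<mu>'" and W: "W_inf \<mu> \<mu>' \<le> ereal h" by auto
    have "W_inf (pushforward T \<mu>) (pushforward T \<mu>') \<le> ereal z"
      by (rule winf_push[OF Tm Tb _ W]) (use psi_cont[OF assms(1,2) hp] in auto)
    then have "pushforward T \<mu>' \<in> {\<mu>''. prob_dist \<mu>'' \<and> W_inf (pushforward T \<mu>) \<mu>'' \<le> ereal z}"
      using push_prob_dist[OF Tm p] by auto
    then have "(INF \<mu>''\<in>{\<mu>''. prob_dist \<mu>'' \<and> W_inf (pushforward T \<mu>) \<mu>'' \<le> ereal z}. renyi \<alpha> \<mu>'' (pushforward T \<nu>))
        \<le> renyi \<alpha> (pushforward T \<mu>') (pushforward T \<nu>)" by (rule INF_lower)
    also have "\<dots> \<le> renyi \<alpha> \<mu>' \<nu>" by (rule dpi[OF Tm p assms(6,7)])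
    finally show "(INF \<mu>''\<in>{\<mu>''. prob_dist \<mu>'' \<and> W_inf (pushforward T \<mu>) \<mu>'' \<le> ereal z}. renyi \<alpha> \<mu>'' (pushforward T \<nu>))
        \<le> renyi \<alpha> \<mu>' \<nu>" .
  qed
qed

end
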